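(* Let $a,b\in\mathbb{N}$ with $a+b$ even, and let $n$ be a positive integer. Then $$2n\ \Big|\ \sum_{k=0}^{n-1}\binom{n-1}{k}^a\binom{-n-1}{k}^b\binom{2k}{k}(k+2)3^{n-1-k}.$$
   Context: $\binom{x}{k}=x(x-1)\cdots(x-k+1)/k!$ for any integer $x$. *)

theory Defs
  imports Complex_Main
begin

end

theory Submission
  imports Defs
begin

lemma pow_step_dvd:
  fixes n k p p' Z Z' s :: int
  assumes "n dvd k*p + k*p'" "n dvd k*Z - s*k*Z'"
  shows "n dvd k*p^a*Z - (-1)^a*s*k*p'^a*Z'"
proof (induction a)
  case 0
  then show ?case using assms(2) by simp
next
  case (Suc a)
  have "k*p^Suc a*Z - (-1)^Suc a*s*k*p'^Suc a*Z'
      = p^a*Z*(k*p + k*p') - p'*(k*p^a*Z - (-1)^a*s*k*p'^a*Z')"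
    by (simp add: algebra_simps)
  also have "n dvd \<dots>" using Suc assms(1) by (simp add: dvd_diff)
  finally show ?case .
qed

lemma x_rec: "int (Suc j) * int (N choose Suc j) + int (Suc j) * int (N choose j)
   = int (Suc N) * int (N choose j)"
proof -
  have a: "Suc j * (N choose Suc j) = (N - j) * (N choose j)"
    using binomial_absorption[of j N] binomial_absorb_comp[of N j] by simp
  show ?thesis
  proof (cases "j \<le> N")
    case True
    then have "int (Suc j * (N choose Suc j)) = (int N - int j) * int (N choose j)"
      using a by (simp add: of_nat_diff)
    then show ?thesis by (simp add: algebra_simps)
  next
    case False
    then show ?thesis by (simp add: binomial_eq_0)
  qed
qed

lemma y_alg:
  fixes B B' s J n :: int
  assumes "(J+1) * B = (n + J + 1) * B'"
  shows "(J+1) * (-s * B) + (J+1) * (s * B') = n * (-s * B')"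
proof -
  have "(J+1) * (-s * B) + (J+1) * (s * B') = s * ((J+1)*B' - (J+1) * B)" by (simp add: algebra_simps)
  also have "... = n * (-s * B')" using assms by (simp add: algebra_simps)
  finally show ?thesis .
qed

lemma y_rec: "int (Suc j) * ((-1)^Suc j * int (n + Suc j choose Suc j))
   + int (Suc j) * ((-1)^j * int (n + j choose j))
   = int n * ((-1)^Suc j * int (n + j choose j))"
proof -
  have e: "Suc j * (Suc (n+j) choose Suc j) = Suc (n+j) * (n+j choose j)"
    by (rule Suc_times_binomial)
  have h: "(int j + 1) * int (n + Suc j choose Suc j) = (int n + int j + 1) * int (n+j choose j)"
    using arg_cong[OF e, of int] by (simp del: binomial_Suc_Suc add: algebra_simps)
  have "int (Suc j) = int j + 1" by simp
  then show ?thesis using y_alg[OF h, of "(-1)^j"] by (simp del: binomial_Suc_Suc add: algebra_simps)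
qed

lemma central_rec: "Suc j * (2 * Suc j choose Suc j) = 2 * (2*j+1) * (2*j choose j)"
proof -
  have e1: "Suc j * (Suc (2*j+1) choose Suc j) = Suc (2*j+1) * (2*j+1 choose j)"
    by (rule Suc_times_binomial)
  have e2: "Suc (2*j) * (2*j choose j) = (Suc (2*j) choose Suc j) * Suc j"
    by (rule Suc_times_binomial_eq)
  have e3: "(2*j+1 choose Suc j) = (2*j+1 choose j)"
    using binomial_symmetric[of "Suc j" "2*j+1"] by simp
  have "Suc j * (2 * Suc j choose Suc j) = 2 * (Suc j * (2*j+1 choose j))"
    using e1 by simp
  also have "Suc j * (2*j+1 choose j) = (2*j+1) * (2*j choose j)"
    using e2 e3 by simp
  finally show ?thesis by simp
qed

lemma central_even: "even (2 * Suc j choose Suc j)"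
proof -
  have "(Suc (2*j+1) choose Suc j) = (2*j+1 choose j) + (2*j+1 choose Suc j)" by simp
  moreover have "(2*j+1 choose Suc j) = (2*j+1 choose j)"
    using binomial_symmetric[of "Suc j" "2*j+1"] by simp
  ultimately show ?thesis by simp
qed

theorem lemma3p4:
  fixes a b n :: nat
  assumes "even (a + b)" and "n > 0"
  shows "\<exists>m::int. (\<Sum>k = 0..n - 1. (of_int (int (n - 1)) gchoose k) ^ a
        * (of_int (- int n - 1) gchoose k) ^ b
        * (of_int (2 * int k) gchoose k) * of_int (int k + 2) * 3 ^ (n - 1 - k))
      = (of_int (2 * int n * m) :: rat)"
proof -
  define x where "x k = int ((n-1) choose k)" for k
  define y where "y k = (-1)^k * int ((n+k) choose k)" for k
  define w where "w k = x k ^ a * y k ^ b" for k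
  define t where "t k = int (2*k choose k) * int (k+2) * 3^(n-1-k)" for k
  define v where "v k = int (k * (2*k choose k)) * 3^(n-k)" for k
  have conv: "(of_int (int (n - 1)) gchoose k) ^ a
        * (of_int (- int n - 1) gchoose k) ^ b
        * (of_int (2 * int k) gchoose k) * of_int (int k + 2) * 3 ^ (n - 1 - k)
      = (of_int (w k * t k) :: rat)" for k
  proof -
    have 1: "(of_int (int (n - 1)) gchoose k :: rat) = of_int (x k)"
      unfolding x_def by (simp add: binomial_gbinomial)
    have "(of_int (- int n - 1) :: rat) = - (of_nat n + 1)" by simp
    then have "(of_int (- int n - 1) gchoose k :: rat)
        = (-1)^k * ((of_nat n + 1 + of_nat k - 1) gchoose k)"
      using gbinomial_minus[of "of_nat n + 1 :: rat" k] by simp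
    also have "(of_nat n + 1 + of_nat k - 1 :: rat) = of_nat (n+k)" by simp
    finally have 2: "(of_int (- int n - 1) gchoose k :: rat) = of_int (y k)"
      unfolding y_def by (simp add: binomial_gbinomial)
    have 3: "(of_int (2 * int k) gchoose k :: rat) = of_nat (2*k choose k)"
      by (simp add: binomial_gbinomial)
    show ?thesis unfolding 1 2 3 unfolding w_def t_def of_int_mult of_int_power
      by simp
  qed
  have tv: "t k = v (Suc k) - v k" if "k < n" for k
  proof -
    define r where "r = n - 1 - k"
    have r: "n - k = Suc r" "n - 1 - k = r" "n - Suc k = r"
      using that unfolding r_def by arith+
    have c: "int (Suc k * (2 * Suc k choose Suc k)) = 2*(2*int k+1) * int (2*k choose k)"
      by (simp only: central_rec of_nat_mult of_nat_add of_nat_1 of_nat_numeral)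
    have hv1: "v (Suc k) = 2*(2*int k+1) * int (2*k choose k) * 3^r"
      by (simp only: v_def r(3) c)
    have hv0: "v k = 3 * int k * int (2*k choose k) * 3^r"
      unfolding v_def r(1) by simp
    have ht: "t k = int (2*k choose k) * (int k + 2) * 3^r"
      unfolding t_def r(2) by simp
    show ?thesis unfolding hv1 hv0 ht by (simp add: algebra_simps)
  qed
  have key: "2 * int n dvd v (Suc j) * (w (Suc j) - w j)" for j
  proof -
    have h1: "int n dvd int (Suc j) * y (Suc j) ^ b - 1 * int (Suc j) * y j ^ b * 1 * (-1)^b"
    proof -
      have "int n dvd int (Suc j) * y (Suc j) + int (Suc j) * y j"
        unfolding y_def using y_rec[of j n] by simp
      from pow_step_dvd[OF this, of 1 1 1 b]
      show ?thesis by (simp add: algebra_simps)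
    qed
    have h2: "int n dvd int (Suc j) * x (Suc j) + int (Suc j) * x j"
    proof (cases n)
      case 0 then show ?thesis using assms by simp
    next
      case (Suc N)
      then show ?thesis unfolding x_def using x_rec[of j N] by simp
    qed
    have h1': "int n dvd int (Suc j) * y (Suc j) ^ b - (-1)^b * int (Suc j) * y j ^ b"
      using h1 by (simp add: algebra_simps)
    have "int n dvd int (Suc j) * x (Suc j)^a * y (Suc j)^b
        - (-1)^a * (-1)^b * int (Suc j) * x j ^a * y j ^ b"
      using pow_step_dvd[OF h2 h1', of a] by simp
    moreover have "(-1::int)^a * (-1)^b = 1"
      using assms(1) by (simp add: power_add[symmetric])
    ultimately have d: "int n dvd int (Suc j) * (w (Suc j) - w j)"
      unfolding w_def by (simp add: algebra_simps)
    obtain c where c: "(2 * Suc j choose Suc j) = 2 * c"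
      using central_even[of j] by blast
    have "v (Suc j) * (w (Suc j) - w j) = (2 * int c * 3^(n - Suc j)) * (int (Suc j) * (w (Suc j) - w j))"
      unfolding v_def c by (simp add: algebra_simps)
    also have "2 * int n dvd \<dots>"
      using d by (intro mult_dvd_mono) auto
    finally show ?thesis .
  qed
  have P: "Suc m \<le> n \<Longrightarrow> 2 * int n dvd (\<Sum>k<Suc m. w k * t k) - w m * v (Suc m)" for m
  proof (induction m)
    case 0
    then have "t 0 = v 1" using tv[of 0] by (simp add: v_def)
    then show ?case by simp
  next
    case (Suc m)
    have IH: "2 * int n dvd (\<Sum>k<Suc m. w k * t k) - w m * v (Suc m)" using Suc by simp
    have ht: "t (Suc m) = v (Suc (Suc m)) - v (Suc m)" using tv Suc.prems by simp
    have "(\<Sum>k<Suc (Suc m). w k * t k) - w (Suc m) * v (Suc (Suc m))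
       = ((\<Sum>k<Suc m. w k * t k) - w m * v (Suc m)) - v (Suc m) * (w (Suc m) - w m)"
      by (simp only: sum.lessThan_Suc[of _ "Suc m"] ht) (simp add: algebra_simps)
    also have "2 * int n dvd \<dots>" using IH key by (simp add: dvd_diff)
    finally show ?case .
  qed
  obtain N where N: "n = Suc N" using assms(2) by (cases n) auto
  have vn: "2 * int n dvd v n"
  proof -
    obtain c where c: "(2 * Suc N choose Suc N) = 2 * c"
      using central_even[of N] by blast
    have "v n = 2 * int n * int c" unfolding v_def N c by (simp add: algebra_simps)
    then show ?thesis by simp
  qed
  have "2 * int n dvd (\<Sum>k<n. w k * t k)"
    using P[of N] vn N
    by (metis (no_types, lifting) diff_add_cancel dvd_add dvd_mult le_refl)
  then obtain m where m: "(\<Sum>k<n. w k * t k) = 2 * int n * m" by blast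
  have "{0..n-1} = {..<n}" using assms(2) by auto
  then have "(\<Sum>k = 0..n - 1. (of_int (int (n - 1)) gchoose k) ^ a
        * (of_int (- int n - 1) gchoose k) ^ b
        * (of_int (2 * int k) gchoose k) * of_int (int k + 2) * 3 ^ (n - 1 - k))
      = (of_int (\<Sum>k<n. w k * t k) :: rat)"
    by (simp only: conv of_int_sum)
  then show ?thesis using m by auto
qed

end
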